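(* Let $a,b\in\mathbb{Q}$ be such that $f(x)=x^{12}+ax^6+b$ is irreducible over $\mathbb{Q}$. Let $G_4$ be the Galois group of $x^4+ax^2+b$ and $G_6$ the Galois group of $x^6+ax^3+b$ over $\mathbb{Q}$. Then $(G_4,G_6)\notin\{(4T1,6T1),(4T1,6T2),(4T1,6T5)\}$.
   Context: Galois groups are regarded as transitive permutation groups on the roots up to conjugacy; $nTj$ denotes the $j$-th conjugacy class of transitive subgroups of $S_n$ in the Butler–McKay numbering (so $4T1=C_4$, $6T1=C_6$, $6T2=S_3$ acting regularly, $6T5=C_3\times S_3$). *)

theory Defs
  imports Complex_Main "HOL-Computational_Algebra.Polynomial" "HOL-Combinatorics.Cycles"
begin

definition root_set :: "rat poly \<Rightarrow> complex set" where
  "root_set p = {z. poly (map_poly of_rat p) z = 0}"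

definition is_subfield :: "complex set \<Rightarrow> bool" where
  "is_subfield S \<longleftrightarrow> 0 \<in> S \<and> 1 \<in> S \<and>
     (\<forall>x\<in>S. \<forall>y\<in>S. x + y \<in> S \<and> x * y \<in> S) \<and>
     (\<forall>x\<in>S. - x \<in> S \<and> inverse x \<in> S)"

definition splitting_field :: "rat poly \<Rightarrow> complex set" where
  "splitting_field p = \<Inter>{S. is_subfield S \<and> root_set p \<subseteq> S}"

text \<open>Field automorphisms of the splitting field (they automatically fix Q).\<close>
definition gal_auts :: "rat poly \<Rightarrow> (complex \<Rightarrow> complex) set" where
  "gal_auts p = {\<sigma>. let K = splitting_field p in
      \<sigma> ` K = K \<and> inj_on \<sigma> K \<and> \<sigma> 1 = 1 \<and>
      (\<forall>x\<in>K. \<forall>y\<in>K. \<sigma> (x + y) = \<sigma> x + \<sigma> y \<and> \<sigma> (x * y) = \<sigma> x * \<sigma> y)}"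

text \<open>A group G of maps acting on R is, as a permutation group, conjugate to the
  permutation group T on {0..<n}: there is a labelling of R by {0..<n}
  transporting the action of G exactly onto T.\<close>
definition perm_conj :: "(complex \<Rightarrow> complex) set \<Rightarrow> complex set \<Rightarrow> nat \<Rightarrow> (nat \<Rightarrow> nat) set \<Rightarrow> bool" where
  "perm_conj G R n T \<longleftrightarrow> (\<exists>\<phi>. bij_betw \<phi> R {..<n} \<and>
      (\<lambda>\<sigma> i. if i < n then \<phi> (\<sigma> (inv_into R \<phi> i)) else i) ` G = T)"

definition galois_group_is :: "rat poly \<Rightarrow> nat \<Rightarrow> (nat \<Rightarrow> nat) set \<Rightarrow> bool" where
  "galois_group_is p n T \<longleftrightarrow> perm_conj (gal_auts p) (root_set p) n T"

inductive_set perm_gen :: "(nat \<Rightarrow> nat) set \<Rightarrow> (nat \<Rightarrow> nat) set" for S where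
  gen_id: "id \<in> perm_gen S"
| gen_step: "s \<in> S \<Longrightarrow> g \<in> perm_gen S \<Longrightarrow> s \<circ> g \<in> perm_gen S"

text \<open>Representatives of the transitive groups (points 1..n renumbered 0..n-1).\<close>
definition T4_1 :: "(nat \<Rightarrow> nat) set" where
  "T4_1 = perm_gen {cycle_of_list [0,1,2,3]}"

definition T6_1 :: "(nat \<Rightarrow> nat) set" where
  "T6_1 = perm_gen {cycle_of_list [0,1,2,3,4,5]}"

definition T6_2 :: "(nat \<Rightarrow> nat) set" where  \<comment> \<open>S3 acting regularly (left multiplication)\<close>
  "T6_2 = perm_gen {cycle_of_list [0,1,2] \<circ> cycle_of_list [3,5,4],
                    Transposition.transpose 0 3 \<circ> Transposition.transpose 1 4 \<circ> Transposition.transpose 2 5}"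

definition T6_5 :: "(nat \<Rightarrow> nat) set" where  \<comment> \<open>C3 x S3 = C3 wr C2\<close>
  "T6_5 = perm_gen {cycle_of_list [0,1,2], cycle_of_list [3,4,5],
                    Transposition.transpose 0 3 \<circ> Transposition.transpose 1 4 \<circ> Transposition.transpose 2 5}"

end

theory Submission
  imports Defs
begin


lemma sf_subfield: "is_subfield (splitting_field p)"
  unfolding splitting_field_def is_subfield_def by auto

lemma R_sub: "root_set p \<subseteq> splitting_field p"
  unfolding splitting_field_def by auto

lemma poly_in_K:
  assumes "z \<in> splitting_field p"
  shows "poly (map_poly of_rat q) z \<in> splitting_field p"
proof (induction q)
  case 0 then show ?case using sf_subfield[of p] by (simp add: is_subfield_def)
next
  case (pCons c q)
  have c: "of_rat c \<in> splitting_field p"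
  proof -
    obtain n d where nd: "quotient_of c = (n, d)" by (cases "quotient_of c")
    have cq: "c = of_int n / of_int d" using quotient_of_div[OF nd] .
    have "of_int n \<in> splitting_field p" for n :: int
    proof -
      have "of_nat m \<in> splitting_field p" for m :: nat
        by (induction m) (use sf_subfield[of p] in \<open>auto simp: is_subfield_def\<close>)
      moreover have "(of_int n :: complex) = (if n \<ge> 0 then of_nat (nat n) else - of_nat (nat (-n)))"
        by simp
      ultimately show ?thesis using sf_subfield[of p] unfolding is_subfield_def
        by (metis (no_types, lifting))
    qed
    then have "(of_int n :: complex) * inverse (of_int d) \<in> splitting_field p"
      using sf_subfield[of p] unfolding is_subfield_def by blast
    then show ?thesis using cq by (simp add: of_rat_mult of_rat_inverse divide_inverse)
  qed
  have "poly (map_poly of_rat (pCons c q)) z = of_rat c + z * poly (map_poly of_rat q) z"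
    by (simp add: map_poly_pCons)
  then show ?case using c pCons assms sf_subfield[of p] unfolding is_subfield_def by simp
qed

lemma int_in_K: "(of_int n :: complex) \<in> splitting_field p"
proof -
  have "of_nat m \<in> splitting_field p" for m :: nat
    by (induction m) (use sf_subfield[of p] in \<open>auto simp: is_subfield_def\<close>)
  moreover have "(of_int n :: complex) = (if n \<ge> 0 then of_nat (nat n) else - of_nat (nat (-n)))"
    by simp
  ultimately show ?thesis using sf_subfield[of p] unfolding is_subfield_def
    by (metis (no_types, lifting))
qed

lemma rat_in_K: "(of_rat c :: complex) \<in> splitting_field p"
  using poly_in_K[of 0 p "[:c:]"] sf_subfield[of p] by (simp add: is_subfield_def map_poly_pCons)

context
  fixes \<sigma> p
  assumes s: "\<sigma> \<in> gal_auts p"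
begin

lemma aK: "\<sigma> ` splitting_field p = splitting_field p" and ainj: "inj_on \<sigma> (splitting_field p)"
  and a1: "\<sigma> 1 = 1"
  and aadd: "x \<in> splitting_field p \<Longrightarrow> y \<in> splitting_field p \<Longrightarrow> \<sigma> (x + y) = \<sigma> x + \<sigma> y"
  and amult: "x \<in> splitting_field p \<Longrightarrow> y \<in> splitting_field p \<Longrightarrow> \<sigma> (x * y) = \<sigma> x * \<sigma> y"
  using s unfolding gal_auts_def Let_def by auto

lemma a0: "\<sigma> 0 = 0"
  using aadd[of 0 0] sf_subfield[of p] unfolding is_subfield_def by simp

lemma aneg: "x \<in> splitting_field p \<Longrightarrow> \<sigma> (- x) = - \<sigma> x"
proof -
  assume x: "x \<in> splitting_field p"
  have "\<sigma> x + \<sigma> (- x) = 0"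
    using aadd[of x "-x"] a0 x sf_subfield[of p] unfolding is_subfield_def by simp
  then show ?thesis by (metis add.commute add_eq_0_iff)
qed

lemma anat: "\<sigma> (of_nat m) = of_nat m"
proof (induction m)
  case 0 then show ?case using a0 by simp
next
  case (Suc m)
  have "\<sigma> (1 + of_nat m) = \<sigma> 1 + \<sigma> (of_nat m)"
    using aadd[of 1 "of_nat m"] int_in_K[of "int m" p] sf_subfield[of p]
    unfolding is_subfield_def by simp
  then show ?case using Suc a1 by simp
qed

lemma aint: "\<sigma> (of_int n) = of_int n"
proof -
  have "(of_int n :: complex) = (if n \<ge> 0 then of_nat (nat n) else - of_nat (nat (-n)))"
    by simp
  moreover have "\<sigma> (- of_nat (nat (-n))) = - of_nat (nat (-n))"
  proof -
    have "(of_nat (nat (-n))::complex) \<in> splitting_field p"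
      using int_in_K[of "int (nat (-n))" p] by (simp only: of_int_of_nat_eq)
    then show ?thesis using aneg[of "of_nat (nat (-n))"] anat by simp
  qed
  ultimately show ?thesis using anat by (metis of_int_of_nat_eq)
qed

lemma ainv: "x \<in> splitting_field p \<Longrightarrow> \<sigma> (inverse x) = inverse (\<sigma> x)"
proof (cases "x = 0")
  case True then show ?thesis using a0 by simp
next
  case False
  assume x: "x \<in> splitting_field p"
  have "\<sigma> x * \<sigma> (inverse x) = 1"
    using amult[of x "inverse x"] x False a1 sf_subfield[of p] unfolding is_subfield_def by simp
  then show ?thesis by (metis inverse_unique)
qed

lemma arat: "\<sigma> (of_rat c) = of_rat c"
proof -
  obtain n d where nd: "quotient_of c = (n, d)" by (cases "quotient_of c")
  have cq: "c = of_int n * inverse (of_int d)" using quotient_of_div[OF nd] by (simp add: divide_inverse)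
  have "\<sigma> (of_int n * inverse (of_int d)) = of_int n * inverse (of_int d)"
    using amult[of "of_int n" "inverse (of_int d)"] ainv[of "of_int d"] aint int_in_K[of _ p]
      sf_subfield[of p] unfolding is_subfield_def by simp
  then show ?thesis using cq by (simp add: of_rat_mult of_rat_inverse)
qed

lemma apoly: "z \<in> splitting_field p \<Longrightarrow> \<sigma> (poly (map_poly of_rat q) z) = poly (map_poly of_rat q) (\<sigma> z)"
proof (induction q)
  case 0 then show ?case using a0 by simp
next
  case (pCons c q)
  have "poly (map_poly of_rat (pCons c q)) z = of_rat c + z * poly (map_poly of_rat q) z"
    "poly (map_poly of_rat (pCons c q)) (\<sigma> z) = of_rat c + \<sigma> z * poly (map_poly of_rat q) (\<sigma> z)"
    by (simp_all add: map_poly_pCons)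
  moreover have "\<sigma> (of_rat c + z * poly (map_poly of_rat q) z) = of_rat c + \<sigma> z * poly (map_poly of_rat q) (\<sigma> z)"
    using aadd amult arat pCons poly_in_K[of z p q] rat_in_K[of c p] sf_subfield[of p]
    unfolding is_subfield_def by simp
  ultimately show ?case by simp
qed

lemma aroot: "z \<in> root_set p \<Longrightarrow> \<sigma> z \<in> root_set p"
  using apoly[of z p] R_sub[of p] a0 unfolding root_set_def by auto

end

lemma cnj_rat: "cnj (of_rat c) = of_rat c"
proof -
  obtain n d where nd: "quotient_of c = (n, d)" by (cases "quotient_of c")
  have cq: "c = of_int n / of_int d" using quotient_of_div[OF nd] .
  show ?thesis unfolding cq by (simp add: of_rat_divide)
qed

lemma cnj_poly: "cnj (poly (map_poly of_rat q) z) = poly (map_poly of_rat q) (cnj z)"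
  by (induction q) (simp_all add: map_poly_pCons cnj_rat)

lemma cnj_aut: "cnj \<in> gal_auts p"
proof -
  have R: "cnj ` root_set p \<subseteq> root_set p"
    unfolding root_set_def using cnj_poly by (auto simp: complex_cnj_zero_iff) (metis complex_cnj_zero)
  have sub: "cnj x \<in> splitting_field p" if x: "x \<in> splitting_field p" for x
  proof -
    have "cnj x \<in> S" if S: "is_subfield S" "root_set p \<subseteq> S" for S
    proof -
      have "is_subfield (cnj ` S)"
        using S(1) unfolding is_subfield_def
        by (auto simp: image_iff) (metis complex_cnj_one complex_cnj_zero complex_cnj_cnj complex_cnj_add complex_cnj_mult complex_cnj_minus complex_cnj_inverse)+
      moreover have "root_set p \<subseteq> cnj ` S"
      proof
        fix r assume "r \<in> root_set p"
        then have "cnj r \<in> S" using R S(2) by auto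
        then show "r \<in> cnj ` S" by (metis complex_cnj_cnj image_eqI)
      qed
      ultimately have "x \<in> cnj ` S" using x unfolding splitting_field_def by auto
      then show ?thesis by auto
    qed
    then show ?thesis unfolding splitting_field_def by auto
  qed
  have "cnj ` splitting_field p = splitting_field p"
  proof
    show "cnj ` splitting_field p \<subseteq> splitting_field p" using sub by auto
    show "splitting_field p \<subseteq> cnj ` splitting_field p"
    proof
      fix x assume "x \<in> splitting_field p"
      then have "cnj x \<in> splitting_field p" by (rule sub)
      then show "x \<in> cnj ` splitting_field p" by (metis complex_cnj_cnj image_eqI)
    qed
  qed
  then show ?thesis unfolding gal_auts_def Let_def by (auto simp: inj_on_def)
qed




definition L4 :: "nat list list" where
 "L4 = [[0,1,2,3],[1,2,3,0],[2,3,0,1],[3,0,1,2]]"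
definition L61 :: "nat list list" where
 "L61 = [[0,1,2,3,4,5],[1,2,3,4,5,0],[2,3,4,5,0,1],[3,4,5,0,1,2],[4,5,0,1,2,3],[5,0,1,2,3,4]]"
definition L65 :: "nat list list" where
 "L65 = [[0, 1, 2, 3, 4, 5], [0, 1, 2, 4, 5, 3], [0, 1, 2, 5, 3, 4], [1, 2, 0, 3, 4, 5], [1, 2, 0, 4, 5, 3], [1, 2, 0, 5, 3, 4], [2, 0, 1, 3, 4, 5], [2, 0, 1, 4, 5, 3], [2, 0, 1, 5, 3, 4], [3, 4, 5, 0, 1, 2], [3, 4, 5, 1, 2, 0], [3, 4, 5, 2, 0, 1], [4, 5, 3, 0, 1, 2], [4, 5, 3, 1, 2, 0], [4, 5, 3, 2, 0, 1], [5, 3, 4, 0, 1, 2], [5, 3, 4, 1, 2, 0], [5, 3, 4, 2, 0, 1]]"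

lemma perm_gen_list:
  assumes "\<And>s l. s \<in> S \<Longrightarrow> l \<in> set L \<Longrightarrow> map s l \<in> set L"
    and "[0..<n] \<in> set L"
    and "P \<in> perm_gen S"
  shows "map P [0..<n] \<in> set L"
  using assms(3)
proof induction
  case gen_id
  then show ?case using assms(2) by simp
next
  case (gen_step s g)
  have "map (s \<circ> g) [0..<n] = map s (map g [0..<n])" by simp
  then show ?case using assms(1) gen_step by metis
qed

lemma T4_1_list: "P \<in> T4_1 \<Longrightarrow> map P [0..<4] \<in> set L4"
  unfolding T4_1_def
  apply (erule perm_gen_list[rotated 2])
   apply (auto simp: L4_def upt_rec)
  done

lemma T6_1_list: "P \<in> T6_1 \<Longrightarrow> map P [0..<6] \<in> set L61"
  unfolding T6_1_def
  apply (erule perm_gen_list[rotated 2])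
   apply (auto simp: L61_def upt_rec)
  done

lemma T6_2_list: "P \<in> T6_2 \<Longrightarrow> map P [0..<6] \<in> set L65"
  unfolding T6_2_def
  apply (erule perm_gen_list[rotated 2])
   apply (auto simp: L65_def upt_rec Transposition.transpose_def)
  done

lemma T6_5_list: "P \<in> T6_5 \<Longrightarrow> map P [0..<6] \<in> set L65"
  unfolding T6_5_def
  apply (erule perm_gen_list[rotated 2])
   apply (auto simp: L65_def upt_rec Transposition.transpose_def)
  done

lemma c4_in: "cycle_of_list [0,1,2,3] \<in> T4_1"
  unfolding T4_1_def using perm_gen.gen_step[OF _ perm_gen.gen_id] by fastforce

lemma c4_map: "map (cycle_of_list [0,1,2,3]) [0..<4] = [1,2,3,0]"
  by (simp add: upt_rec Transposition.transpose_def)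

lemma L6_prop: "l \<in> set L61 \<union> set L65 \<Longrightarrow> map (\<lambda>k. l!(l!k)) [0..<6] = [0..<6] \<Longrightarrow>
   j \<in> set [0..<6] \<Longrightarrow> l!j = j \<Longrightarrow> l = [0..<6]"
  by (auto simp: L61_def L65_def upt_rec)




lemma map_poly_of_rat_add: "map_poly (of_rat :: rat \<Rightarrow> complex) (p + q) = map_poly of_rat p + map_poly of_rat q"
  by (rule poly_eqI) (simp add: coeff_map_poly of_rat_add)

lemma poly_trin: "poly (map_poly of_rat (monom 1 n + smult a (monom 1 m) + [:b:])) (z::complex)
   = z^n + of_rat a * z^m + of_rat b"
  by (simp add: map_poly_of_rat_add map_poly_smult map_poly_monom poly_monom of_rat_add of_rat_mult map_poly_pCons)

lemma of_rat_cx: "(of_rat c :: complex) = of_real (of_rat c)"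
proof -
  obtain n d where nd: "quotient_of c = (n, d)" by (cases "quotient_of c")
  have cq: "c = of_int n / of_int d" using quotient_of_div[OF nd] .
  show ?thesis unfolding cq by (simp add: of_rat_divide)
qed

lemma b_nz:
  fixes a b :: rat
  assumes "irreducible (monom 1 12 + smult a (monom 1 6) + [:b:])"
  shows "b \<noteq> 0"
proof
  assume b: "b = 0"
  have "monom 1 12 + smult a (monom 1 6) + [:b:] = monom (1::rat) 6 * (monom 1 6 + [:a:])"
    using b by (simp add: algebra_simps mult_monom smult_monom flip: monom_0)
  moreover have "\<not> is_unit (monom (1::rat) 6)" by (simp add: is_unit_iff_degree degree_monom_eq)
  moreover have "\<not> is_unit (monom (1::rat) 6 + [:a:])"
  proof -
    have "degree (monom (1::rat) 6 + [:a:]) = 6" by (simp add: degree_add_eq_left degree_monom_eq)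
    then show ?thesis by (subst is_unit_iff_degree) auto
  qed
  ultimately show False using assms irreducibleD by metis
qed

lemma pc:
  assumes "perm_conj G R n T"
  obtains \<phi> where "bij_betw \<phi> R {..<n}"
    "\<And>\<sigma>. \<sigma> \<in> G \<Longrightarrow> \<exists>P\<in>T. \<forall>x\<in>R. P (\<phi> x) = \<phi> (\<sigma> x)"
    "\<And>P. P \<in> T \<Longrightarrow> \<exists>\<sigma>\<in>G. \<forall>x\<in>R. P (\<phi> x) = \<phi> (\<sigma> x)"
proof -
  obtain \<phi> where b: "bij_betw \<phi> R {..<n}"
    and T: "(\<lambda>\<sigma> i. if i < n then \<phi> (\<sigma> (inv_into R \<phi> i)) else i) ` G = T"
    using assms unfolding perm_conj_def by blast
  have key: "(if \<phi> x < n then \<phi> (\<sigma> (inv_into R \<phi> (\<phi> x))) else \<phi> x) = \<phi> (\<sigma> x)" if "x \<in> R" for x \<sigma>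
    using b that by (auto simp: bij_betw_def inv_into_f_f)
  show ?thesis
  proof (rule that[OF b])
    fix \<sigma> assume "\<sigma> \<in> G"
    then show "\<exists>P\<in>T. \<forall>x\<in>R. P (\<phi> x) = \<phi> (\<sigma> x)"
      by (intro bexI[of _ "\<lambda>i. if i < n then \<phi> (\<sigma> (inv_into R \<phi> i)) else i"]) (use T key in auto)
  next
    fix P assume "P \<in> T"
    then obtain \<sigma> where "\<sigma> \<in> G" "P = (\<lambda>i. if i < n then \<phi> (\<sigma> (inv_into R \<phi> i)) else i)"
      using T by blast
    then show "\<exists>\<sigma>\<in>G. \<forall>x\<in>R. P (\<phi> x) = \<phi> (\<sigma> x)" using key by blast
  qed
qed




lemma L4_fact: "l \<in> set L4 \<Longrightarrow> k < 4 \<Longrightarrow> l!k < 4 \<and> (l!k = k \<or> l!(l!k) \<noteq> k \<or> l!k = [1,2,3,0]!([1,2,3,0]!k))"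
proof -
  assume "l \<in> set L4" "k < 4"
  moreover have "k = 0 \<or> k = 1 \<or> k = 2 \<or> k = 3" using \<open>k < 4\<close> by auto
  ultimately show ?thesis by (auto simp: L4_def)
qed

lemma quad_inv:
  assumes t: "\<tau> \<in> gal_auts p" and u: "u \<in> splitting_field p"
    and q: "u*u + of_rat a * u + of_rat b = 0"
  shows "\<tau> (\<tau> u) = u"
proof -
  let ?K = "splitting_field p"
  let ?A = "of_rat a :: complex" and ?B = "of_rat b :: complex"
  have F: "is_subfield ?K" by (rule sf_subfield)
  have AK: "?A \<in> ?K" "?B \<in> ?K" by (rule rat_in_K)+
  have uu: "u*u \<in> ?K" "?A*u \<in> ?K" "u*u + ?A*u \<in> ?K" using F AK u unfolding is_subfield_def by auto
  define v where "v = \<tau> u"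
  have vK: "v \<in> ?K" using aK[OF t] u v_def by blast
  have "\<tau> (u*u + ?A*u + ?B) = v*v + ?A*v + ?B"
    using aadd[OF t] amult[OF t] arat[OF t] uu AK u unfolding v_def by simp
  then have "v*v + ?A*v + ?B = 0" using q a0[OF t] by simp
  moreover have "(v - u) * (v + u + ?A) = (v*v + ?A*v + ?B) - (u*u + ?A*u + ?B)"
    by (simp add: algebra_simps)
  ultimately have "(v - u) * (v + u + ?A) = 0" using q by simp
  then have "v - u = 0 \<or> v + (u + ?A) = 0" by (simp add: add.assoc)
  then have "v = u \<or> v = - ?A + - u"
  proof
    assume "v + (u + ?A) = 0"
    then have "v = - (u + ?A)" by (metis add.commute add_eq_0_iff)
    then show ?thesis by simp
  qed simp
  then show ?thesis
  proof
    assume "v = u" then show ?thesis unfolding v_def by simp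
  next
    assume e: "v = - ?A + - u"
    have "-?A \<in> ?K" "-u \<in> ?K" using F AK u unfolding is_subfield_def by auto
    then have "\<tau> v = \<tau> (-?A) + \<tau> (-u)" using e aadd[OF t, of "-?A" "-u"] by simp
    also have "\<dots> = - ?A - v" using aneg[OF t] AK u arat[OF t] v_def by simp
    finally have "\<tau> v = - ?A - v" .
    moreover have "\<tau> u = - ?A + - u" using e v_def by simp
    ultimately show ?thesis unfolding v_def by simp
  qed
qed




lemma case_pos:
  fixes a b :: rat
  assumes b0: "b \<noteq> 0"
    and D: "(of_rat a::real)^2 - 4 * of_rat b \<ge> 0"
    and T: "galois_group_is (monom 1 6 + smult a (monom 1 3) + [:b:]) 6 T"
    and TL: "\<And>P. P \<in> T \<Longrightarrow> map P [0..<6] \<in> set L61 \<union> set L65"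
  shows False
proof -
  define p where "p = monom 1 6 + smult a (monom 1 3) + [:b:]"
  define ar br where "ar = (of_rat a :: real)" and "br = (of_rat b :: real)"
  define R where "R = root_set p"
  have R: "R = {z. z^6 + of_real ar * z^3 + of_real br = 0}"
    unfolding R_def p_def root_set_def ar_def br_def by (simp add: poly_trin of_rat_cx)
  define u where "u = (- ar + sqrt (ar^2 - 4*br)) / 2"
  have sq: "sqrt (ar^2 - 4*br) ^ 2 = ar^2 - 4*br" using D ar_def br_def by simp
  have uq: "u^2 + ar*u + br = 0"
    unfolding u_def using sq by (simp add: power2_eq_square field_simps)
  have brnz: "br \<noteq> 0" using b0 br_def by simp
  have u0: "u \<noteq> 0" using uq brnz by auto
  define r where "r = root 3 u"
  have r3: "r^3 = u" unfolding r_def by (simp add: odd_real_root_pow)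
  have r0: "r \<noteq> 0" using r3 u0 by auto
  define w where "w = cis (2*pi/3)"
  have w3: "w^3 = 1" unfolding w_def by (simp add: DeMoivre)
  have wi: "Im w \<noteq> 0" unfolding w_def using sin_gt_zero[of "2*pi/3"] by simp
  define x1 where "x1 = complex_of_real r"
  define x2 where "x2 = complex_of_real r * w"
  have x13: "x1^3 = of_real u" unfolding x1_def using r3 by (metis of_real_power)
  have x23: "x2^3 = of_real u" unfolding x2_def using r3 w3 by (simp add: power_mult_distrib flip: of_real_power)
  have root6: "x^3 = of_real u \<Longrightarrow> x \<in> R" for x
  proof -
    assume h: "x^3 = of_real u"
    have "x^6 = (x^3)^2" by (simp flip: power_mult)
    then have "x^6 + of_real ar * x^3 + of_real br = of_real (u^2 + ar*u + br)" using h by simp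
    then show ?thesis using uq R by simp
  qed
  have x1R: "x1 \<in> R" and x2R: "x2 \<in> R" using root6 x13 x23 by auto
  have c1: "cnj x1 = x1" unfolding x1_def by simp
  have c2: "cnj x2 \<noteq> x2"
  proof
    assume "cnj x2 = x2"
    then have "Im x2 = 0" by (metis Reals_cnj_iff complex_is_Real_iff)
    then show False unfolding x2_def using r0 wi by simp
  qed
  obtain \<phi> where bij: "bij_betw \<phi> R {..<6}"
    and G: "\<And>\<sigma>. \<sigma> \<in> gal_auts p \<Longrightarrow> \<exists>P\<in>T. \<forall>x\<in>R. P (\<phi> x) = \<phi> (\<sigma> x)"
    using pc[of "gal_auts p" R 6 T] T unfolding galois_group_is_def p_def R_def by metis
  obtain P where PT: "P \<in> T" and Pc: "\<forall>x\<in>R. P (\<phi> x) = \<phi> (cnj x)"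
    using G[OF cnj_aut] by blast
  have cR: "x \<in> R \<Longrightarrow> cnj x \<in> R" for x using aroot[OF cnj_aut] unfolding R_def by blast
  have inj: "inj_on \<phi> R" and img: "\<phi> ` R = {..<6}" using bij by (auto simp: bij_betw_def)
  have PP: "P (P k) = k" if k: "k < 6" for k
  proof -
    obtain y where y: "y \<in> R" "k = \<phi> y" using k img by (metis imageE lessThan_iff)
    then show ?thesis using Pc cR by simp
  qed
  define l where "l = map P [0..<6]"
  have lL: "l \<in> set L61 \<union> set L65" using TL[OF PT] l_def by simp
  have lP: "k < 6 \<Longrightarrow> l ! k = P k" for k unfolding l_def by simp
  have Plt: "k < 6 \<Longrightarrow> P k < 6" for k
  proof -
    assume k: "k < 6"
    obtain y where y: "y \<in> R" "k = \<phi> y" using k img by (metis imageE lessThan_iff)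
    then show ?thesis using Pc cR img by auto
  qed
  have "map (\<lambda>k. l!(l!k)) [0..<6] = map (\<lambda>k. k) [0..<6]"
    by (rule map_cong) (auto simp: lP Plt PP)
  then have lid: "l = [0..<6]"
    using L6_prop[OF lL, of "\<phi> x1"] x1R img c1 Pc lP by (auto simp: map_idI)
  have "\<phi> x2 < 6" using x2R img by auto
  then have "P (\<phi> x2) = \<phi> x2" using lP[of "\<phi> x2"] lid by simp
  then have "\<phi> (cnj x2) = \<phi> x2" using Pc x2R by simp
  then have "cnj x2 = x2" using inj x2R cR[OF x2R] by (meson inj_onD)
  then show False using c2 by simp
qed




lemma case_neg:
  fixes a b :: rat
  assumes D: "(of_rat a::real)^2 - 4 * of_rat b < 0"
    and T: "galois_group_is (monom 1 4 + smult a (monom 1 2) + [:b:]) 4 T4_1"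
  shows False
proof -
  define p where "p = monom 1 4 + smult a (monom 1 2) + [:b:]"
  define ar br where "ar = (of_rat a :: real)" and "br = (of_rat b :: real)"
  define A B where "A = (of_rat a :: complex)" and "B = (of_rat b :: complex)"
  define R where "R = root_set p"
  define K where "K = splitting_field p"
  have AB: "A = of_real ar" "B = of_real br" unfolding A_def B_def ar_def br_def by (simp_all add: of_rat_cx)
  have R: "R = {z. z^4 + A * z^2 + B = 0}"
    unfolding R_def p_def root_set_def A_def B_def by (simp add: poly_trin)
  define s where "s = sqrt (- (ar^2 - 4*br))"
  have sq: "s^2 = - (ar^2 - 4*br)" "s > 0" using D ar_def br_def s_def by auto
  define u where "u = Complex (- ar / 2) (s / 2)"
  have uq: "u*u + A*u + B = 0"
    using sq unfolding u_def AB by (simp add: complex_eq_iff power2_eq_square field_simps)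
  have cu: "cnj u \<noteq> u" unfolding u_def using sq by (simp add: complex_eq_iff)
  define s0 where "s0 = csqrt u"
  have s02: "s0 * s0 = u" unfolding s0_def by (metis power2_csqrt power2_eq_square)
  have e4: "s0^4 + A*s0^2 + B = u*u + A*u + B" unfolding s02[symmetric] by (simp add: eval_nat_numeral algebra_simps)
  have s0R: "s0 \<in> R" unfolding R using uq e4 by simp
  have RK: "R \<subseteq> K" unfolding R_def K_def by (rule R_sub)
  have F: "is_subfield K" unfolding K_def by (rule sf_subfield)
  have uK: "u \<in> K" using s02 s0R RK F unfolding is_subfield_def by auto
  obtain \<phi> where bij: "bij_betw \<phi> R {..<4}"
    and G: "\<And>\<sigma>. \<sigma> \<in> gal_auts p \<Longrightarrow> \<exists>P\<in>T4_1. \<forall>x\<in>R. P (\<phi> x) = \<phi> (\<sigma> x)"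
    and G': "\<And>P. P \<in> T4_1 \<Longrightarrow> \<exists>\<sigma>\<in>gal_auts p. \<forall>x\<in>R. P (\<phi> x) = \<phi> (\<sigma> x)"
    using pc[of "gal_auts p" R 4 T4_1] T unfolding galois_group_is_def p_def R_def by metis
  obtain P where PT: "P \<in> T4_1" and Pc: "\<forall>x\<in>R. P (\<phi> x) = \<phi> (cnj x)"
    using G[OF cnj_aut] by blast
  obtain \<tau> where tG: "\<tau> \<in> gal_auts p" and tc: "\<forall>x\<in>R. cycle_of_list [0,1,2,3] (\<phi> x) = \<phi> (\<tau> x)"
    using G'[OF c4_in] by blast
  have cR: "x \<in> R \<Longrightarrow> cnj x \<in> R" for x using aroot[OF cnj_aut] unfolding R_def by blast
  have tR: "x \<in> R \<Longrightarrow> \<tau> x \<in> R" for x using aroot[OF tG] unfolding R_def by blast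
  have inj: "inj_on \<phi> R" and img: "\<phi> ` R = {..<4}" using bij by (auto simp: bij_betw_def)
  have PP: "P (P k) = k" if k: "k < 4" for k
  proof -
    obtain y where y: "y \<in> R" "k = \<phi> y" using k img by (metis imageE lessThan_iff)
    then show ?thesis using Pc cR by simp
  qed
  define l where "l = map P [0..<4]"
  have lL: "l \<in> set L4" using T4_1_list[OF PT] l_def by simp
  have lP: "k < 4 \<Longrightarrow> l ! k = P k" for k unfolding l_def by simp
  define i0 where "i0 = \<phi> s0"
  have i0: "i0 < 4" using s0R img i0_def by auto
  have cs: "cnj s0 \<noteq> s0"
  proof
    assume "cnj s0 = s0"
    then have "cnj u = u" using s02 by (metis complex_cnj_mult)
    then show False using cu by simp
  qed
  have cmap: "k < 4 \<Longrightarrow> cycle_of_list [0,1,2,3] k = [1,2,3,0] ! k" for k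
  proof -
    assume "k < 4"
    then have "k = 0 \<or> k = 1 \<or> k = 2 \<or> k = 3" by auto
    then show ?thesis by (auto simp: Transposition.transpose_def)
  qed
  have ti0: "cycle_of_list [0,1,2,3] i0 = \<phi> (\<tau> s0)" using tc s0R i0_def by simp
  have ti0': "\<phi> (\<tau> s0) < 4" using tR[OF s0R] img by auto
  from L4_fact[OF lL i0] consider "l!i0 = i0" | "l!(l!i0) \<noteq> i0" | "l!i0 = [1,2,3,0]!([1,2,3,0]!i0)"
    by blast
  then show False
  proof cases
    case 1
    then have "\<phi> (cnj s0) = \<phi> s0" using lP[OF i0] Pc s0R i0_def by simp
    then have "cnj s0 = s0" using inj s0R cR[OF s0R] by (meson inj_onD)
    then show False using cs by simp
  next
    case 2
    have "l!i0 < 4" using L4_fact[OF lL i0] by simp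
    then show False using 2 lP i0 PP by simp
  next
    case 3
    have "\<phi> (cnj s0) = P i0" using Pc s0R i0_def by simp
    also have "\<dots> = cycle_of_list [0,1,2,3] (cycle_of_list [0,1,2,3] i0)"
      using 3 lP[OF i0] cmap i0 ti0 ti0' by simp
    also have "\<dots> = \<phi> (\<tau> (\<tau> s0))" using ti0 tc tR[OF s0R] by simp
    finally have "cnj s0 = \<tau> (\<tau> s0)" using inj cR[OF s0R] tR[OF tR[OF s0R]] s0R by (meson inj_onD)
    then have "cnj u = \<tau> (\<tau> s0) * \<tau> (\<tau> s0)" using s02 by (metis complex_cnj_mult)
    also have "\<dots> = \<tau> (\<tau> u)"
      using amult[OF tG] s0R tR[OF s0R] RK s02 unfolding K_def by (metis subsetD)
    also have "\<dots> = u" using quad_inv[OF tG, of u a b] uK uq unfolding K_def A_def B_def by simp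
    finally show False using cu by simp
  qed
qed




theorem lemma3p4:
  fixes a b :: rat
  assumes "irreducible (monom 1 12 + smult a (monom 1 6) + [:b:])"
  shows "\<not> (galois_group_is (monom 1 4 + smult a (monom 1 2) + [:b:]) 4 T4_1 \<and>
            (galois_group_is (monom 1 6 + smult a (monom 1 3) + [:b:]) 6 T6_1 \<or>
             galois_group_is (monom 1 6 + smult a (monom 1 3) + [:b:]) 6 T6_2 \<or>
             galois_group_is (monom 1 6 + smult a (monom 1 3) + [:b:]) 6 T6_5))"
proof
  assume H: "galois_group_is (monom 1 4 + smult a (monom 1 2) + [:b:]) 4 T4_1 \<and>
            (galois_group_is (monom 1 6 + smult a (monom 1 3) + [:b:]) 6 T6_1 \<or>
             galois_group_is (monom 1 6 + smult a (monom 1 3) + [:b:]) 6 T6_2 \<or>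
             galois_group_is (monom 1 6 + smult a (monom 1 3) + [:b:]) 6 T6_5)"
  have b0: "b \<noteq> 0" by (rule b_nz[OF assms])
  show False
  proof (cases "(of_rat a::real)^2 - 4 * of_rat b \<ge> 0")
    case True
    from H obtain T where "galois_group_is (monom 1 6 + smult a (monom 1 3) + [:b:]) 6 T"
      and "\<And>P. P \<in> T \<Longrightarrow> map P [0..<6] \<in> set L61 \<union> set L65"
      using T6_1_list T6_2_list T6_5_list by blast
    then show False using case_pos[OF b0 True] by blast
  next
    case False
    then show False using case_neg[of a b] H by simp
  qed
qed


end
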